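(* Let $X$ be an infinite-dimensional first-countable topological vector space over $\mathbb{K}$, let $M\subset X$ and let $\alpha\ge\aleph_0$ be a cardinal. Then: (i) $M$ is $\alpha$-dense-lineable if and only if $M$ is $\alpha$-infinitely $\alpha$-dense-lineable; (ii) $M$ is pointwise $\alpha$-dense-lineable if and only if $M$ is $\alpha$-infinitely pointwise $\alpha$-dense-lineable; (iii) for every cardinal $\gamma<\alpha$, $M$ is $(\gamma,\alpha)$-dense-lineable if and only if $M$ is $\alpha$-infinitely $(\gamma,\alpha)$-dense-lineable.
   Context: $M$ is $\alpha$-dense-lineable if there is a dense linear subspace $Y$ of $X$ with $\dim(Y)=\alpha$ and $Y\subset M\cup\{0\}$; it is $\alpha$-infinitely $\alpha$-dense-lineable if there is a family $\{Y_\kappa\}_{\kappa<\alpha}$ of dense $\alpha$-dimensional subspaces of $X$ contained in $M\cup\{0\}$ with $Y_{\kappa_1}\cap Y_{\kappa_2}=\{0\}$ for $\kappa_1\ne\kappa_2$. $M$ is $\gamma$-lineable if some $\gamma$-dimensional subspace lies in $M\cup\{0\}$. $M$ is pointwise $\alpha$-dense-lineable if for each $x\in M$ there is a dense $\alpha$-dimensional subspace $Y$ with $x\in Y\subset M\cup\{0\}$; it is $\alpha$-infinitely pointwise $\alpha$-dense-lineable if for each $x\in M$ there is a family $\{Y_\kappa\}_{\kappa<\alpha}$ of dense $\alpha$-dimensional subspaces with $x\in Y_\kappa\subset M\cup\{0\}$ and $Y_{\kappa_1}\cap Y_{\kappa_2}=\mathrm{span}(x)$ for $\kappa_1\ne\kappa_2$.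 For $\gamma<\alpha$, $M$ is $(\gamma,\alpha)$-dense-lineable if $M$ is $\gamma$-lineable and every $\gamma$-dimensional subspace $W\subset M\cup\{0\}$ is contained in a dense $\alpha$-dimensional subspace $Y\subset M\cup\{0\}$; it is $\alpha$-infinitely $(\gamma,\alpha)$-dense-lineable if $M$ is $\gamma$-lineable and for every such $W$ there is a family $\{Y_\kappa\}_{\kappa<\alpha}$ of dense $\alpha$-dimensional subspaces with $W\subset Y_\kappa\subset M\cup\{0\}$ and $Y_{\kappa_1}\cap Y_{\kappa_2}=W$ for $\kappa_1\ne\kappa_2$. *)

theory Defs
  imports "HOL-Analysis.Analysis"
begin

definition tvs :: "('k::real_normed_field \<Rightarrow> 'a::{ab_group_add,topological_space} \<Rightarrow> 'a) \<Rightarrow> bool" where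
  "tvs sc \<longleftrightarrow> vector_space sc
     \<and> continuous_on UNIV (\<lambda>p::'a \<times> 'a. fst p + snd p)
     \<and> continuous_on UNIV (\<lambda>p::'k \<times> 'a. sc (fst p) (snd p))"

definition inf_dim :: "('k::field \<Rightarrow> 'a::ab_group_add \<Rightarrow> 'a) \<Rightarrow> bool" where
  "inf_dim sc \<longleftrightarrow> \<not> (\<exists>B. finite B \<and> module.span sc B = UNIV)"

definition has_dim :: "('k::field \<Rightarrow> 'a::ab_group_add \<Rightarrow> 'a) \<Rightarrow> 'a set \<Rightarrow> 'b set \<Rightarrow> bool" where
  "has_dim sc Y A \<longleftrightarrow> (\<exists>B. B \<subseteq> Y \<and> \<not> module.dependent sc B \<and> module.span sc B = Y
      \<and> (card_of B, card_of A) \<in> ordIso)"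

definition good_subspace :: "('k::field \<Rightarrow> 'a::{ab_group_add,topological_space} \<Rightarrow> 'a) \<Rightarrow> 'a set \<Rightarrow> 'b set \<Rightarrow> 'a set \<Rightarrow> bool" where
  "good_subspace sc M A Y \<longleftrightarrow> module.subspace sc Y \<and> closure Y = UNIV \<and> has_dim sc Y A
      \<and> Y \<subseteq> M \<union> {0}"

definition dense_lineable :: "('k::field \<Rightarrow> 'a::{ab_group_add,topological_space} \<Rightarrow> 'a) \<Rightarrow> 'a set \<Rightarrow> 'b set \<Rightarrow> bool" where
  "dense_lineable sc M A \<longleftrightarrow> (\<exists>Y. good_subspace sc M A Y)"

text \<open>alpha-infinitely alpha-dense-lineable; the family is indexed by A (a set of cardinality alpha).\<close>
definition inf_dense_lineable :: "('k::field \<Rightarrow> 'a::{ab_group_add,topological_space} \<Rightarrow> 'a) \<Rightarrow> 'a set \<Rightarrow> 'b set \<Rightarrow> bool" where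
  "inf_dense_lineable sc M A \<longleftrightarrow> (\<exists>Y::'b \<Rightarrow> 'a set.
      (\<forall>k\<in>A. good_subspace sc M A (Y k))
      \<and> (\<forall>k1\<in>A. \<forall>k2\<in>A. k1 \<noteq> k2 \<longrightarrow> Y k1 \<inter> Y k2 = {0}))"

definition lineable :: "('k::field \<Rightarrow> 'a::ab_group_add \<Rightarrow> 'a) \<Rightarrow> 'a set \<Rightarrow> 'c set \<Rightarrow> bool" where
  "lineable sc M C \<longleftrightarrow> (\<exists>W. module.subspace sc W \<and> has_dim sc W C \<and> W \<subseteq> M \<union> {0})"

definition pointwise_dense_lineable :: "('k::field \<Rightarrow> 'a::{ab_group_add,topological_space} \<Rightarrow> 'a) \<Rightarrow> 'a set \<Rightarrow> 'b set \<Rightarrow> bool" where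
  "pointwise_dense_lineable sc M A \<longleftrightarrow> (\<forall>x\<in>M. \<exists>Y. x \<in> Y \<and> good_subspace sc M A Y)"

definition inf_pointwise_dense_lineable :: "('k::field \<Rightarrow> 'a::{ab_group_add,topological_space} \<Rightarrow> 'a) \<Rightarrow> 'a set \<Rightarrow> 'b set \<Rightarrow> bool" where
  "inf_pointwise_dense_lineable sc M A \<longleftrightarrow> (\<forall>x\<in>M. \<exists>Y::'b \<Rightarrow> 'a set.
      (\<forall>k\<in>A. x \<in> Y k \<and> good_subspace sc M A (Y k))
      \<and> (\<forall>k1\<in>A. \<forall>k2\<in>A. k1 \<noteq> k2 \<longrightarrow> Y k1 \<inter> Y k2 = module.span sc {x}))"

text \<open>(gamma,alpha)-dense-lineable, gamma = |C|, alpha = |A| (the condition gamma < alpha is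
imposed in the theorem).\<close>
definition ga_dense_lineable :: "('k::field \<Rightarrow> 'a::{ab_group_add,topological_space} \<Rightarrow> 'a) \<Rightarrow> 'a set \<Rightarrow> 'c set \<Rightarrow> 'b set \<Rightarrow> bool" where
  "ga_dense_lineable sc M C A \<longleftrightarrow> lineable sc M C \<and>
     (\<forall>W. module.subspace sc W \<and> has_dim sc W C \<and> W \<subseteq> M \<union> {0} \<longrightarrow>
        (\<exists>Y. W \<subseteq> Y \<and> good_subspace sc M A Y))"

definition inf_ga_dense_lineable :: "('k::field \<Rightarrow> 'a::{ab_group_add,topological_space} \<Rightarrow> 'a) \<Rightarrow> 'a set \<Rightarrow> 'c set \<Rightarrow> 'b set \<Rightarrow> bool" where
  "inf_ga_dense_lineable sc M C A \<longleftrightarrow> lineable sc M C \<and>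
     (\<forall>W. module.subspace sc W \<and> has_dim sc W C \<and> W \<subseteq> M \<union> {0} \<longrightarrow>
        (\<exists>Y::'b \<Rightarrow> 'a set.
           (\<forall>k\<in>A. W \<subseteq> Y k \<and> good_subspace sc M A (Y k))
           \<and> (\<forall>k1\<in>A. \<forall>k2\<in>A. k1 \<noteq> k2 \<longrightarrow> Y k1 \<inter> Y k2 = W)))"

end

theory Submission
  imports Defs
begin


context vector_space begin

lemma span_Int_indep:
  assumes "independent (P \<union> Q)"
  shows "span P \<inter> span Q \<subseteq> span (P \<inter> Q)"
proof
  fix x assume x: "x \<in> span P \<inter> span Q"
  let ?R = "representation (P \<union> Q) x"
  have rP: "?R = representation P x"
    using representation_extend[OF assms, of x P] x by auto
  have rQ: "?R = representation Q x"
    using representation_extend[OF assms, of x Q] x by auto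
  have supp: "?R b \<noteq> 0 \<Longrightarrow> b \<in> P \<inter> Q" for b
    using representation_ne_zero[of P x b] representation_ne_zero[of Q x b] rP rQ by auto
  have xin: "x \<in> span (P \<union> Q)" using x span_mono[of P "P \<union> Q"] by auto
  have "x = (\<Sum>b | ?R b \<noteq> 0. scale (?R b) b)"
    using sum_nonzero_representation_eq[OF assms xin] by simp
  also have "\<dots> \<in> span (P \<inter> Q)"
    by (intro span_sum span_scale span_base) (use supp in auto)
  finally show "x \<in> span (P \<inter> Q)" .
qed

lemma indep_family:
  assumes indE: "independent E" and CS: "C \<subseteq> span S" and SE: "S \<subseteq> E"
    and indC: "independent C"
    and bE: "\<forall>i\<in>I. b i \<in> E" and cE: "\<forall>i\<in>I. c i \<in> E - S" and injc: "inj_on c I"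
    and t0: "\<forall>i\<in>I. t i \<noteq> 0" and rk: "\<forall>i\<in>I. rk (b i) < (rk (c i) :: nat)"
    and v_def: "v = (\<lambda>i. b i + scale (t i) (c i))"
  shows "independent (C \<union> v ` I) \<and> inj_on v I"
proof -
  have key: "\<forall>J. finite J \<longrightarrow> J \<subseteq> I \<longrightarrow> card J = n \<longrightarrow> independent (C \<union> v ` J) \<and> inj_on v J" for n
  proof (induction n)
    case 0
    then show ?case using indC by auto
  next
    case (Suc n)
    show ?case
    proof (intro allI impI)
      fix J assume fJ: "finite J" and JI: "J \<subseteq> I" and cJ: "card J = Suc n"
      then have "J \<noteq> {}" by auto
      let ?m = "Max ((\<lambda>i. rk (c i)) ` J)"
      have "?m \<in> (\<lambda>i. rk (c i)) ` J" using fJ \<open>J \<noteq> {}\<close> by (intro Max_in) auto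
      then obtain j where jJ: "j \<in> J" and jm: "rk (c j) = ?m" by auto
      have jmax: "rk (c i) \<le> rk (c j)" if "i \<in> J" for i
        using jm fJ that by (metis Max_ge finite_imageI imageI)
      define J' where "J' = J - {j}"
      have "finite J'" "J' \<subseteq> I" "card J' = n"
        using fJ JI cJ jJ unfolding J'_def by auto
      then have IH: "independent (C \<union> v ` J') \<and> inj_on v J'"
        using Suc.IH by blast
      have jI: "j \<in> I" using jJ JI by auto
      have cjE: "c j \<in> E" and cjS: "c j \<notin> S" using cE jI by auto
      have sub: "C \<union> v ` J' \<subseteq> span (E - {c j})"
      proof
        fix y assume "y \<in> C \<union> v ` J'"
        then show "y \<in> span (E - {c j})"
        proof
          assume "y \<in> C"
          then have "y \<in> span S" using CS by auto
          moreover have "S \<subseteq> E - {c j}" using SE cjS by auto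
          ultimately show ?thesis using span_mono by blast
        next
          assume "y \<in> v ` J'"
          then obtain i where iJ': "i \<in> J'" and y: "y = v i" by auto
          have iI: "i \<in> I" and iJ: "i \<in> J" and ij: "i \<noteq> j" using iJ' JI unfolding J'_def by auto
          have "rk (b i) < rk (c j)" using rk iI jmax[OF iJ] by force
          then have "b i \<in> E - {c j}" using bE iI by auto
          moreover have "c i \<in> E - {c j}" using cE iI injc ij jI by (auto dest: inj_onD)
          ultimately show ?thesis unfolding y v_def
            by (intro span_add span_scale span_base)
        qed
      qed
      have notin: "v j \<notin> span (C \<union> v ` J')"
      proof
        assume "v j \<in> span (C \<union> v ` J')"
        then have vj: "v j \<in> span (E - {c j})"
          using span_minimal[OF sub subspace_span] by auto
        have "b j \<in> E - {c j}" using bE rk jI by force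
        then have "v j - b j \<in> span (E - {c j})" using vj by (intro span_diff) (auto intro: span_base)
        then have "scale (t j) (c j) \<in> span (E - {c j})" unfolding v_def by simp
        then have "scale (inverse (t j)) (scale (t j) (c j)) \<in> span (E - {c j})" by (rule span_scale)
        then have "c j \<in> span (E - {c j})" using t0 jI by simp
        then have "dependent E" using cjE unfolding dependent_def by blast
        then show False using indE by simp
      qed
      have JJ: "J = insert j J'" using jJ unfolding J'_def by auto
      have "C \<union> v ` J = insert (v j) (C \<union> v ` J')" using JJ by auto
      moreover have "independent (insert (v j) (C \<union> v ` J'))"
        using IH notin by (intro independent_insertI) auto
      moreover have "inj_on v J"
        unfolding JJ using IH notin span_superset[of "C \<union> v ` J'"] by (auto simp: inj_on_insert)
      ultimately show "independent (C \<union> v ` J) \<and> inj_on v J" by simp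
    qed
  qed
  have fin: "independent (C \<union> v ` J) \<and> inj_on v J" if "finite J" "J \<subseteq> I" for J
    using key that by blast
  have "independent (C \<union> v ` I)"
  proof
    assume "dependent (C \<union> v ` I)"
    then obtain T u where T: "finite T" "T \<subseteq> C \<union> v ` I" "\<exists>x\<in>T. u x \<noteq> 0" "(\<Sum>x\<in>T. scale (u x) x) = 0"
      unfolding dependent_explicit by blast
    have "finite (T \<inter> v ` I)" "T \<inter> v ` I \<subseteq> v ` I" using T by auto
    then obtain J where J: "J \<subseteq> I" "finite J" "T \<inter> v ` I = v ` J"
      using finite_subset_image by metis
    have "T \<subseteq> C \<union> v ` J" using T J by auto
    moreover have "dependent T" unfolding dependent_explicit using T by blast
    ultimately have "dependent (C \<union> v ` J)" using dependent_mono by blast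
    then show False using fin J by blast
  qed
  moreover have "inj_on v I"
  proof (rule inj_onI)
    fix i i' assume "i \<in> I" "i' \<in> I" "v i = v i'"
    then show "i = i'" using fin[of "{i, i'}"] by (auto dest: inj_onD)
  qed
  ultimately show ?thesis by simp
qed

end


lemma fin_less_inf: "finite X \<Longrightarrow> infinite Y \<Longrightarrow> (card_of X, card_of Y) \<in> ordLess"
  by (rule finite_ordLess_infinite) (auto simp: Field_card_of card_of_Well_order card_of_well_order_on)

lemma closure_subspace:
  fixes sc :: "'k::real_normed_field \<Rightarrow> 'a::{ab_group_add,topological_space} \<Rightarrow> 'a"
  assumes tvs: "tvs sc" and Z: "module.subspace sc Z"
  shows "module.subspace sc (closure Z)"
proof -
  interpret vector_space sc using tvs by (simp add: tvs_def)
  have ca: "continuous_on UNIV (\<lambda>p::'a \<times> 'a. fst p + snd p)"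
    and cs: "continuous_on UNIV (\<lambda>p::'k \<times> 'a. sc (fst p) (snd p))"
    using tvs by (auto simp: tvs_def)
  show ?thesis unfolding subspace_def
  proof (intro conjI ballI allI)
    show "0 \<in> closure Z" using Z closure_subset subspace_0 by blast
  next
    fix x y assume x: "x \<in> closure Z" and y: "y \<in> closure Z"
    have "(x, y) \<in> closure (Z \<times> Z)" using x y by (simp add: closure_Times)
    moreover have "(\<lambda>p. fst p + snd p) ` closure (Z \<times> Z) \<subseteq> closure Z"
      by (rule image_closure_subset)
        (use ca Z closure_subset[of Z] in \<open>auto intro: continuous_on_subset subspace_add\<close>)
    ultimately show "x + y \<in> closure Z" by force
  next
    fix c x assume x: "x \<in> closure Z"
    have cc: "continuous_on UNIV (\<lambda>x. sc c x)"
    proof -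
      have "continuous_on UNIV (\<lambda>x::'a. (c, x))" by (intro continuous_intros)
      from continuous_on_compose2[OF cs this] show ?thesis by simp
    qed
    have "(\<lambda>x. sc c x) ` closure Z \<subseteq> closure Z"
      by (rule image_closure_subset)
        (use cc Z closure_subset[of Z] in \<open>auto intro: continuous_on_subset subspace_scale\<close>)
    then show "sc c x \<in> closure Z" using x by auto
  qed
qed

lemma small_scale:
  fixes sc :: "'k::real_normed_field \<Rightarrow> 'a::{ab_group_add,topological_space} \<Rightarrow> 'a"
  assumes tvs: "tvs sc" and U: "open U" "0 \<in> U"
  shows "\<exists>s. s \<noteq> 0 \<and> sc s c \<in> U"
proof -
  interpret vector_space sc using tvs by (simp add: tvs_def)
  have cs: "continuous_on UNIV (\<lambda>p::'k \<times> 'a. sc (fst p) (snd p))"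
    using tvs by (auto simp: tvs_def)
  have t0: "((\<lambda>n. (of_real (inverse (real (Suc n))) :: 'k)) \<longlongrightarrow> 0) sequentially"
    using tendsto_of_real[OF LIMSEQ_inverse_real_of_nat, where 'a='k] unfolding of_real_0 .
  have "((\<lambda>n. sc (fst (of_real (inverse (real (Suc n))) :: 'k, c)) (snd (of_real (inverse (real (Suc n))) :: 'k, c)))
      \<longlongrightarrow> sc (fst (0::'k, c)) (snd (0::'k, c))) sequentially"
    by (rule continuous_on_tendsto_compose[OF cs], rule tendsto_Pair[OF t0 tendsto_const], auto)
  then have "((\<lambda>n. sc (of_real (inverse (real (Suc n)))) c) \<longlongrightarrow> 0) sequentially" by simp
  then have "eventually (\<lambda>n. sc (of_real (inverse (real (Suc n)))) c \<in> U) sequentially"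
    using U topological_tendstoD by blast
  then obtain n where n: "sc (of_real (inverse (real (Suc n)))) c \<in> U"
    using eventually_sequentially by auto
  have "inverse (real (Suc n)) \<noteq> 0" by simp
  then have "(of_real (inverse (real (Suc n))) :: 'k) \<noteq> 0" by (metis of_real_eq_0_iff)
  with n show ?thesis by blast
qed

lemma tends_in_closure:
  fixes sc :: "'k::real_normed_field \<Rightarrow> 'a::{ab_group_add,first_countable_topology} \<Rightarrow> 'a"
    and x :: 'a
  assumes tvs: "tvs sc" and h1: "(y \<longlongrightarrow> 0) sequentially" and Z: "\<forall>n. x + y n \<in> Z"
  shows "x \<in> closure Z"
proof -
  have ca: "continuous_on UNIV (\<lambda>p::'a \<times> 'a. fst p + snd p)"
    using tvs by (auto simp: tvs_def)
  have "((\<lambda>n. fst (x, y n) + snd (x, y n)) \<longlongrightarrow> fst (x, 0::'a) + snd (x, 0::'a)) sequentially"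
    by (rule continuous_on_tendsto_compose[OF ca], rule tendsto_Pair[OF tendsto_const h1], auto)
  then have "((\<lambda>n. x + y n) \<longlongrightarrow> x) sequentially" by simp
  then show ?thesis unfolding closure_sequential using Z by (intro exI[of _ "\<lambda>n. x + y n"]) simp
qed



lemma core:
  fixes sc :: "'k::real_normed_field \<Rightarrow> 'a::{ab_group_add,first_countable_topology} \<Rightarrow> 'a"
    and A :: "'b set" and C :: "'a set"
  assumes tvs: "tvs sc" and infA: "infinite A" and Yg: "good_subspace sc M A Y"
    and CY: "C \<subseteq> Y" and indC: "\<not> module.dependent sc C"
    and Cl: "(card_of C, card_of A) \<in> ordLess"
  shows "\<exists>Z::'b \<Rightarrow> 'a set. (\<forall>k\<in>A. module.span sc C \<subseteq> Z k \<and> good_subspace sc M A (Z k))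
     \<and> (\<forall>k1\<in>A. \<forall>k2\<in>A. k1 \<noteq> k2 \<longrightarrow> Z k1 \<inter> Z k2 = module.span sc C)"
proof -
  interpret vector_space sc using tvs by (simp add: tvs_def)
  have subY: "subspace Y" and clY: "closure Y = UNIV" and YM: "Y \<subseteq> M \<union> {0}"
    and hd: "has_dim sc Y A" using Yg by (auto simp: good_subspace_def)
  obtain B where BY: "B \<subseteq> Y" and indB: "independent B" and spB: "span B = Y"
    and BA: "(card_of B, card_of A) \<in> ordIso"
    using hd by (auto simp: has_dim_def)
  have AB: "(card_of A, card_of B) \<in> ordLeq" and BA': "(card_of B, card_of A) \<in> ordLeq"
    using BA ordIso_iff_ordLeq by blast+
  have "\<forall>w\<in>C. \<exists>F. finite F \<and> F \<subseteq> B \<and> w \<in> span F"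
  proof
    fix w assume "w \<in> C"
    then have "w \<in> span B" using CY spB by auto
    then obtain t r where "finite t" "t \<subseteq> B" "w = (\<Sum>a\<in>t. sc (r a) a)"
      unfolding span_explicit by blast
    moreover have "(\<Sum>a\<in>t. sc (r a) a) \<in> span t"
      by (intro span_sum span_scale span_base)
    ultimately show "\<exists>F. finite F \<and> F \<subseteq> B \<and> w \<in> span F" by blast
  qed
  then obtain Fs where Fs: "\<forall>w\<in>C. finite (Fs w) \<and> Fs w \<subseteq> B \<and> w \<in> span (Fs w)"
    using bchoice[of C "\<lambda>w F. finite F \<and> F \<subseteq> B \<and> w \<in> span F"] by blast
  define S where "S = (\<Union>w\<in>C. Fs w)"
  have SB: "S \<subseteq> B" using Fs by (auto simp: S_def)
  have CS: "C \<subseteq> span S"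
  proof
    fix w assume "w \<in> C"
    then have "w \<in> span (Fs w)" "Fs w \<subseteq> S" using Fs by (auto simp: S_def)
    then show "w \<in> span S" using span_mono by blast
  qed
  have SA: "(card_of S, card_of A) \<in> ordLess"
  proof (cases "finite C")
    case True
    then have "finite S" using Fs by (auto simp: S_def)
    then show ?thesis using fin_less_inf infA by blast
  next
    case False
    have "(card_of S, card_of C) \<in> ordLeq" unfolding S_def
    proof (rule card_of_UNION_ordLeq_infinite[OF False])
      show "(card_of C, card_of C) \<in> ordLeq" by (rule ordLeq_refl[OF card_of_Card_order])
      show "\<forall>i\<in>C. (card_of (Fs i), card_of C) \<in> ordLeq"
      proof
        fix i assume "i \<in> C"
        then have "finite (Fs i)" using Fs by blast
        then show "(card_of (Fs i), card_of C) \<in> ordLeq"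
          using fin_less_inf[OF _ False] ordLess_imp_ordLeq by blast
      qed
    qed
    then show ?thesis using Cl ordLeq_ordLess_trans by blast
  qed
  define D where "D = B - S"
  have AD: "(card_of A, card_of D) \<in> ordLeq"
  proof (rule ccontr)
    assume "(card_of A, card_of D) \<notin> ordLeq"
    then have "(card_of D, card_of A) \<in> ordLess"
      using not_ordLeq_iff_ordLess[OF card_of_Well_order card_of_Well_order, of A D] by simp
    then have "(card_of (D \<union> S), card_of A) \<in> ordLess"
      by (rule card_of_Un_ordLess_infinite[OF infA _ SA])
    moreover have "(card_of B, card_of (D \<union> S)) \<in> ordLeq"
      by (rule card_of_mono1) (auto simp: D_def)
    ultimately have "(card_of B, card_of A) \<in> ordLess" by (rule ordLeq_ordLess_trans[rotated])
    then show False using not_ordLess_ordLeq[of "card_of B" "card_of A"] AB by simp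
  qed
  define X where "X = (A \<times> B \<times> (UNIV::nat set)) \<times> (UNIV::nat set)"
  have natA: "(card_of (UNIV::nat set), card_of A) \<in> ordLeq"
    using infA infinite_iff_card_of_nat by blast
  have AA: "(card_of A, card_of A) \<in> ordLeq" by (rule ordLeq_refl[OF card_of_Card_order])
  have FA: "infinite (Field (card_of A))" by (simp add: Field_card_of infA)
  have CA: "Card_order (card_of A)" by (rule card_of_Card_order)
  have BN: "(card_of (B \<times> (UNIV::nat set)), card_of A) \<in> ordLeq"
    by (rule card_of_Times_ordLeq_infinite_Field[OF FA BA' natA CA])
  have ABN: "(card_of (A \<times> B \<times> (UNIV::nat set)), card_of A) \<in> ordLeq"
    by (rule card_of_Times_ordLeq_infinite_Field[OF FA AA BN CA])
  have XA: "(card_of X, card_of A) \<in> ordLeq" unfolding X_def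
    by (rule card_of_Times_ordLeq_infinite_Field[OF FA ABN natA CA])
  have "(card_of X, card_of D) \<in> ordLeq" using XA AD by (rule ordLeq_transitive)
  then have "\<exists>g. inj_on g X \<and> g ` X \<subseteq> D" by (simp only: card_of_ordLeq[symmetric])
  then obtain g where ginj: "inj_on g X" and gX: "g ` X \<subseteq> D" by blast
  define rk where "rk d = (if d \<in> g ` X then snd (inv_into X g d) else 0)" for d
  define I where "I = A \<times> B \<times> (UNIV::nat set)"
  define bb where "bb i = fst (snd i)" for i :: "'b \<times> 'a \<times> nat"
  define cc where "cc i = g (i, Suc (rk (bb i)))" for i
  obtain U :: "nat \<Rightarrow> 'a set" where Uo: "\<And>i. open (U i)" and U0: "\<And>i. 0 \<in> U i"
    and Ub: "\<And>S. open S \<Longrightarrow> 0 \<in> S \<Longrightarrow> eventually (\<lambda>i. U i \<subseteq> S) sequentially"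
    using countable_basis_at_decseq[of "0::'a"] by metis
  define tt where "tt i = (SOME s. s \<noteq> 0 \<and> sc s (cc i) \<in> U (snd (snd i)))" for i :: "'b \<times> 'a \<times> nat"
  have ttp: "tt i \<noteq> 0 \<and> sc (tt i) (cc i) \<in> U (snd (snd i))" for i
    unfolding tt_def by (rule someI_ex[OF small_scale[OF tvs Uo U0]])
  define v where "v = (\<lambda>i. bb i + sc (tt i) (cc i))"
  have ccX: "(i, Suc (rk (bb i))) \<in> X" if "i \<in> I" for i using that by (auto simp: X_def I_def)
  have rkcc: "rk (cc i) = Suc (rk (bb i))" if "i \<in> I" for i
  proof -
    have "inv_into X g (g (i, Suc (rk (bb i)))) = (i, Suc (rk (bb i)))"
      by (rule inv_into_f_f[OF ginj ccX[OF that]])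
    moreover have "g (i, Suc (rk (bb i))) \<in> g ` X" using ccX[OF that] by (rule imageI)
    ultimately show ?thesis unfolding cc_def rk_def by simp
  qed
  have indfam: "independent (C \<union> v ` I) \<and> inj_on v I"
  proof (rule indep_family[OF indB CS SB _ _ _ _ _ _ v_def])
    show "independent C" using indC .
    show "\<forall>i\<in>I. bb i \<in> B" by (auto simp: I_def bb_def)
    show "\<forall>i\<in>I. cc i \<in> B - S"
    proof
      fix i assume "i \<in> I"
      then have "g (i, Suc (rk (bb i))) \<in> g ` X" using ccX by blast
      then show "cc i \<in> B - S" using gX unfolding cc_def D_def by blast
    qed
    show "inj_on cc I"
    proof (rule inj_onI)
      fix i j assume "i \<in> I" "j \<in> I" "cc i = cc j"
      then have "(i, Suc (rk (bb i))) = (j, Suc (rk (bb j)))"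
        using inj_onD[OF ginj _ ccX ccX] unfolding cc_def by blast
      then show "i = j" by simp
    qed
    show "\<forall>i\<in>I. tt i \<noteq> 0" using ttp by blast
    show "\<forall>i\<in>I. rk (bb i) < rk (cc i)" using rkcc by auto
  qed
  then have indCV: "independent (C \<union> v ` I)" and injv: "inj_on v I" by auto
  define V where "V k = v ` ({k} \<times> B \<times> (UNIV::nat set))" for k
  define Z where "Z k = span (C \<union> V k)" for k
  have VI: "V k \<subseteq> v ` I" if "k \<in> A" for k using that by (auto simp: V_def I_def)
  have vY: "v i \<in> Y" if "i \<in> I" for i
  proof -
    have "bb i \<in> B" using that by (auto simp: I_def bb_def)
    have "cc i \<in> g ` X" unfolding cc_def using ccX[OF that] by blast
    then have "cc i \<in> B" using gX unfolding D_def by blast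
    note \<open>bb i \<in> B\<close> this
    then have "v i \<in> span B" unfolding v_def by (intro span_add span_scale span_base)
    then show ?thesis using spB by simp
  qed
  have ZY: "Z k \<subseteq> Y" if "k \<in> A" for k
    unfolding Z_def using CY VI[OF that] vY subY by (intro span_minimal) auto
  have good: "span C \<subseteq> Z k \<and> good_subspace sc M A (Z k)" if kA: "k \<in> A" for k
  proof -
    have "span C \<subseteq> Z k" unfolding Z_def by (rule span_mono) auto
    moreover have "closure (Z k) = UNIV"
    proof -
      have scl: "subspace (closure (Z k))"
        using closure_subspace[OF tvs] unfolding Z_def by simp
      have "B \<subseteq> closure (Z k)"
      proof
        fix b assume bB: "b \<in> B"
        have t0: "((\<lambda>n. sc (tt (k, b, n)) (cc (k, b, n))) \<longlongrightarrow> 0) sequentially"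
        proof (rule topological_tendstoI)
          fix T :: "'a set" assume T: "open T" "0 \<in> T"
          show "eventually (\<lambda>n. sc (tt (k, b, n)) (cc (k, b, n)) \<in> T) sequentially"
          proof (rule eventually_mono[OF Ub[OF T]])
            fix n assume "U n \<subseteq> T"
            then show "sc (tt (k, b, n)) (cc (k, b, n)) \<in> T" using ttp[of "(k, b, n)"] by auto
          qed
        qed
        show "b \<in> closure (Z k)"
        proof (rule tends_in_closure[OF tvs t0])
          show "\<forall>n. b + sc (tt (k, b, n)) (cc (k, b, n)) \<in> Z k"
          proof
            fix n
            have "v (k, b, n) \<in> V k" unfolding V_def using bB by auto
            then have "v (k, b, n) \<in> Z k" unfolding Z_def by (auto intro: span_base)
            then show "b + sc (tt (k, b, n)) (cc (k, b, n)) \<in> Z k"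
              by (simp add: v_def bb_def)
          qed
        qed
      qed
      then have "Y \<subseteq> closure (Z k)" using span_minimal[OF _ scl] spB by blast
      then have "closure Y \<subseteq> closure (Z k)" using closure_mono[of Y "closure (Z k)"] closure_closure[of "Z k"] by simp
      then show ?thesis using clY by auto
    qed
    moreover have "has_dim sc (Z k) A"
      unfolding has_dim_def
    proof (intro exI conjI)
      show "C \<union> V k \<subseteq> Z k" unfolding Z_def by (rule span_superset)
      show "independent (C \<union> V k)"
        using indCV VI[OF kA] independent_mono by blast
      show "span (C \<union> V k) = Z k" by (simp add: Z_def)
      have le1: "(card_of (C \<union> V k), card_of A) \<in> ordLeq"
      proof (rule card_of_Un_ordLeq_infinite_Field)
        show "infinite (Field (card_of A))" by (simp add: Field_card_of infA)
        show "Card_order (card_of A)" by (rule card_of_Card_order)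
        show "(card_of C, card_of A) \<in> ordLeq" using Cl ordLess_imp_ordLeq by blast
        have "(card_of {k}, card_of A) \<in> ordLeq"
          using fin_less_inf[OF _ infA, of "{k}"] ordLess_imp_ordLeq by blast
        then have "(card_of ({k} \<times> B \<times> (UNIV::nat set)), card_of A) \<in> ordLeq"
          by (rule card_of_Times_ordLeq_infinite_Field[OF FA _ BN CA])
        then show "(card_of (V k), card_of A) \<in> ordLeq"
          unfolding V_def using card_of_image ordLeq_transitive by blast
      qed
      have "(card_of B, card_of (C \<union> V k)) \<in> ordLeq"
      proof -
        have "inj_on (\<lambda>b. v (k, b, 0)) B"
        proof (rule inj_onI)
          fix x y assume xy: "x \<in> B" "y \<in> B" "v (k, x, 0) = v (k, y, 0)"
          have "(k, x, 0::nat) = (k, y, 0)"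
            by (rule inj_onD[OF injv xy(3)]) (use xy kA in \<open>auto simp: I_def\<close>)
          then show "x = y" by simp
        qed
        moreover have "(\<lambda>b. v (k, b, 0)) ` B \<subseteq> C \<union> V k" by (auto simp: V_def)
        ultimately show ?thesis using card_of_ordLeq by blast
      qed
      then have "(card_of A, card_of (C \<union> V k)) \<in> ordLeq" using AB ordLeq_transitive by blast
      then show "(card_of (C \<union> V k), card_of A) \<in> ordIso"
        using le1 ordIso_iff_ordLeq by blast
    qed
    moreover have "Z k \<subseteq> M \<union> {0}" using ZY[OF kA] YM by auto
    ultimately show ?thesis by (simp add: good_subspace_def Z_def)
  qed
  have inter: "Z k1 \<inter> Z k2 = span C" if "k1 \<in> A" "k2 \<in> A" "k1 \<noteq> k2" for k1 k2
  proof
    have "(C \<union> V k1) \<union> (C \<union> V k2) \<subseteq> C \<union> v ` I" using VI that by blast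
    then have "independent ((C \<union> V k1) \<union> (C \<union> V k2))"
      using indCV independent_mono by blast
    then have "Z k1 \<inter> Z k2 \<subseteq> span ((C \<union> V k1) \<inter> (C \<union> V k2))"
      unfolding Z_def by (rule span_Int_indep)
    moreover have "(C \<union> V k1) \<inter> (C \<union> V k2) \<subseteq> C"
    proof
      fix x assume x: "x \<in> (C \<union> V k1) \<inter> (C \<union> V k2)"
      show "x \<in> C"
      proof (rule ccontr)
        assume "x \<notin> C"
        then have "x \<in> V k1" "x \<in> V k2" using x by auto
        then obtain i1 i2 where ii: "i1 \<in> {k1} \<times> B \<times> UNIV" "x = v i1"
          "i2 \<in> {k2} \<times> B \<times> UNIV" "x = v i2" unfolding V_def by blast
        have "i1 = i2"
          by (rule inj_onD[OF injv]) (use ii that in \<open>auto simp: I_def\<close>)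
        then show False using ii that by auto
      qed
    qed
    ultimately show "Z k1 \<inter> Z k2 \<subseteq> span C" using span_mono by blast
    show "span C \<subseteq> Z k1 \<inter> Z k2" using good that by blast
  qed
  show ?thesis by (rule exI[of _ Z]) (use good inter in blast)
qed



theorem corollary3p7:
  fixes sc :: "'k::real_normed_field \<Rightarrow> 'a::{ab_group_add,first_countable_topology} \<Rightarrow> 'a"
    and M :: "'a set" and A :: "'b set"
  assumes "tvs sc" and "inf_dim sc" and "infinite A"
  shows "(dense_lineable sc M A \<longleftrightarrow> inf_dense_lineable sc M A)
    \<and> (pointwise_dense_lineable sc M A \<longleftrightarrow> inf_pointwise_dense_lineable sc M A)
    \<and> (\<forall>C :: 'c set. (card_of C, card_of A) \<in> ordLess \<longrightarrow>
          (ga_dense_lineable sc M C A \<longleftrightarrow> inf_ga_dense_lineable sc M C A))"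
proof -
  note tvs = assms(1) and infA = assms(3)
  interpret vector_space sc using tvs by (simp add: tvs_def)
  have "A \<noteq> {}" using infA by auto
  then obtain k0 where k0: "k0 \<in> A" by blast
  have empt: "(card_of ({}::'a set), card_of A) \<in> ordLess"
    using fin_less_inf infA by blast
  have P1: "dense_lineable sc M A \<longleftrightarrow> inf_dense_lineable sc M A"
  proof
    assume "dense_lineable sc M A"
    then obtain Y where Y: "good_subspace sc M A Y" by (auto simp: dense_lineable_def)
    from core[OF tvs infA Y empty_subsetI independent_empty empt]
    obtain Z :: "'b \<Rightarrow> 'a set" where
      Z: "(\<forall>k\<in>A. span {} \<subseteq> Z k \<and> good_subspace sc M A (Z k))
      \<and> (\<forall>k1\<in>A. \<forall>k2\<in>A. k1 \<noteq> k2 \<longrightarrow> Z k1 \<inter> Z k2 = span {})" by (rule exE)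
    note Za = conjunct1[OF Z] and Zb = conjunct2[OF Z]
    have Z1: "\<forall>k\<in>A. good_subspace sc M A (Z k)"
    proof
      fix k assume "k \<in> A"
      then show "good_subspace sc M A (Z k)" using Za by simp
    qed
    have Z2: "\<forall>k1\<in>A. \<forall>k2\<in>A. k1 \<noteq> k2 \<longrightarrow> Z k1 \<inter> Z k2 = {0}"
      using Zb unfolding span_empty .
    show "inf_dense_lineable sc M A" unfolding inf_dense_lineable_def
      by (intro exI[of _ Z] conjI) (fact Z1, fact Z2)
  next
    assume "inf_dense_lineable sc M A"
    then obtain Y :: "'b \<Rightarrow> 'a set" where Y: "(\<forall>k\<in>A. good_subspace sc M A (Y k))
      \<and> (\<forall>k1\<in>A. \<forall>k2\<in>A. k1 \<noteq> k2 \<longrightarrow> Y k1 \<inter> Y k2 = {0})"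
      unfolding inf_dense_lineable_def by (rule exE)
    have "good_subspace sc M A (Y k0)" using conjunct1[OF Y] k0 by (rule bspec)
    then show "dense_lineable sc M A" unfolding dense_lineable_def by (rule exI)
  qed
  have P2: "pointwise_dense_lineable sc M A \<longleftrightarrow> inf_pointwise_dense_lineable sc M A"
  proof
    assume H: "pointwise_dense_lineable sc M A"
    show "inf_pointwise_dense_lineable sc M A" unfolding inf_pointwise_dense_lineable_def
    proof
      fix x assume xM: "x \<in> M"
      have "\<exists>Y. x \<in> Y \<and> good_subspace sc M A Y"
        using H xM unfolding pointwise_dense_lineable_def by (rule bspec)
      then obtain Y where Y0: "x \<in> Y \<and> good_subspace sc M A Y" by (rule exE)
      note xY = conjunct1[OF Y0] and Y = conjunct2[OF Y0]
      define C where "C = (if x = 0 then {} else {x})"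
      have CY: "C \<subseteq> Y" using xY by (auto simp: C_def)
      have indC: "\<not> dependent C" using independent_empty by (auto simp: C_def)
      have "finite C" by (auto simp: C_def)
      then have CA: "(card_of C, card_of A) \<in> ordLess" using infA by (rule fin_less_inf)
      have spC: "span C = span {x}" by (auto simp: C_def)
      have xC: "x \<in> span C" unfolding spC by (rule span_base) simp
      from core[OF tvs infA Y CY indC CA]
      obtain Z :: "'b \<Rightarrow> 'a set" where
        Z: "(\<forall>k\<in>A. span C \<subseteq> Z k \<and> good_subspace sc M A (Z k))
        \<and> (\<forall>k1\<in>A. \<forall>k2\<in>A. k1 \<noteq> k2 \<longrightarrow> Z k1 \<inter> Z k2 = span C)" by (rule exE)
      note Z1 = conjunct1[OF Z] and Z2 = conjunct2[OF Z]
      have G1: "\<forall>k\<in>A. x \<in> Z k \<and> good_subspace sc M A (Z k)"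
      proof
        fix k assume "k \<in> A"
        then have "span C \<subseteq> Z k \<and> good_subspace sc M A (Z k)" using Z1 by simp
        then show "x \<in> Z k \<and> good_subspace sc M A (Z k)" using xC by auto
      qed
      have G2: "\<forall>k1\<in>A. \<forall>k2\<in>A. k1 \<noteq> k2 \<longrightarrow> Z k1 \<inter> Z k2 = span {x}"
        using Z2 unfolding spC .
      show "\<exists>Y::'b \<Rightarrow> 'a set. (\<forall>k\<in>A. x \<in> Y k \<and> good_subspace sc M A (Y k))
          \<and> (\<forall>k1\<in>A. \<forall>k2\<in>A. k1 \<noteq> k2 \<longrightarrow> Y k1 \<inter> Y k2 = span {x})"
        by (intro exI[of _ Z] conjI) (fact G1, fact G2)
    qed
  next
    assume H: "inf_pointwise_dense_lineable sc M A"
    show "pointwise_dense_lineable sc M A" unfolding pointwise_dense_lineable_def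
    proof
      fix x assume xM: "x \<in> M"
      have "\<exists>Y::'b \<Rightarrow> 'a set. (\<forall>k\<in>A. x \<in> Y k \<and> good_subspace sc M A (Y k))
          \<and> (\<forall>k1\<in>A. \<forall>k2\<in>A. k1 \<noteq> k2 \<longrightarrow> Y k1 \<inter> Y k2 = span {x})"
        using H xM unfolding inf_pointwise_dense_lineable_def by (rule bspec)
      then obtain Y :: "'b \<Rightarrow> 'a set" where Y: "(\<forall>k\<in>A. x \<in> Y k \<and> good_subspace sc M A (Y k))
          \<and> (\<forall>k1\<in>A. \<forall>k2\<in>A. k1 \<noteq> k2 \<longrightarrow> Y k1 \<inter> Y k2 = span {x})" by (rule exE)
      have "x \<in> Y k0 \<and> good_subspace sc M A (Y k0)" using conjunct1[OF Y] k0 by simp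
      then show "\<exists>Y. x \<in> Y \<and> good_subspace sc M A Y" by (rule exI)
    qed
  qed
  have P3: "ga_dense_lineable sc M C A \<longleftrightarrow> inf_ga_dense_lineable sc M C A"
    if CA0: "(card_of C, card_of A) \<in> ordLess" for C :: "'c set"
  proof
    assume H: "ga_dense_lineable sc M C A"
    show "inf_ga_dense_lineable sc M C A" unfolding inf_ga_dense_lineable_def
    proof (intro conjI allI impI)
      show "lineable sc M C" using H by (simp add: ga_dense_lineable_def)
      fix W assume W: "subspace W \<and> has_dim sc W C \<and> W \<subseteq> M \<union> {0}"
      have "\<exists>Y. W \<subseteq> Y \<and> good_subspace sc M A Y"
        using H W unfolding ga_dense_lineable_def by simp
      then obtain Y where Y0: "W \<subseteq> Y \<and> good_subspace sc M A Y" by (rule exE)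
      note WY = conjunct1[OF Y0] and Y = conjunct2[OF Y0]
      have "has_dim sc W C" using W by simp
      then obtain Bw where Bw0: "Bw \<subseteq> W \<and> independent Bw \<and> span Bw = W
        \<and> (card_of Bw, card_of C) \<in> ordIso"
        unfolding has_dim_def by (rule exE)
      have Bw2: "independent Bw" and Bw3: "span Bw = W" and BwC: "(card_of Bw, card_of C) \<in> ordIso"
        using Bw0 by simp_all
      have BwA: "(card_of Bw, card_of A) \<in> ordLess"
        using ordIso_ordLess_trans[OF BwC CA0] .
      have BwY: "Bw \<subseteq> Y" using Bw0 WY by auto
      from core[OF tvs infA Y BwY Bw2 BwA]
      obtain Z :: "'b \<Rightarrow> 'a set" where
        Z: "(\<forall>k\<in>A. span Bw \<subseteq> Z k \<and> good_subspace sc M A (Z k))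
        \<and> (\<forall>k1\<in>A. \<forall>k2\<in>A. k1 \<noteq> k2 \<longrightarrow> Z k1 \<inter> Z k2 = span Bw)" by (rule exE)
      have G: "(\<forall>k\<in>A. W \<subseteq> Z k \<and> good_subspace sc M A (Z k))
        \<and> (\<forall>k1\<in>A. \<forall>k2\<in>A. k1 \<noteq> k2 \<longrightarrow> Z k1 \<inter> Z k2 = W)"
        using Z unfolding Bw3 .
      show "\<exists>Y::'b \<Rightarrow> 'a set. (\<forall>k\<in>A. W \<subseteq> Y k \<and> good_subspace sc M A (Y k))
          \<and> (\<forall>k1\<in>A. \<forall>k2\<in>A. k1 \<noteq> k2 \<longrightarrow> Y k1 \<inter> Y k2 = W)"
        using G by (rule exI[of _ Z])
    qed
  next
    assume H: "inf_ga_dense_lineable sc M C A"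
    show "ga_dense_lineable sc M C A" unfolding ga_dense_lineable_def
    proof (intro conjI allI impI)
      show "lineable sc M C" using H by (simp add: inf_ga_dense_lineable_def)
      fix W assume W: "subspace W \<and> has_dim sc W C \<and> W \<subseteq> M \<union> {0}"
      have "\<exists>Y::'b \<Rightarrow> 'a set. (\<forall>k\<in>A. W \<subseteq> Y k \<and> good_subspace sc M A (Y k))
          \<and> (\<forall>k1\<in>A. \<forall>k2\<in>A. k1 \<noteq> k2 \<longrightarrow> Y k1 \<inter> Y k2 = W)"
        using H W unfolding inf_ga_dense_lineable_def by simp
      then obtain Y :: "'b \<Rightarrow> 'a set" where Y: "(\<forall>k\<in>A. W \<subseteq> Y k \<and> good_subspace sc M A (Y k))
          \<and> (\<forall>k1\<in>A. \<forall>k2\<in>A. k1 \<noteq> k2 \<longrightarrow> Y k1 \<inter> Y k2 = W)" by (rule exE)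
      have "W \<subseteq> Y k0 \<and> good_subspace sc M A (Y k0)" using conjunct1[OF Y] k0 by simp
      then show "\<exists>Y. W \<subseteq> Y \<and> good_subspace sc M A Y" by (rule exI)
    qed
  qed
  show ?thesis
  proof (intro conjI allI impI)
    show "dense_lineable sc M A \<longleftrightarrow> inf_dense_lineable sc M A" by (rule P1)
    show "pointwise_dense_lineable sc M A \<longleftrightarrow> inf_pointwise_dense_lineable sc M A" by (rule P2)
    fix C :: "'c set" assume "(card_of C, card_of A) \<in> ordLess"
    then show "ga_dense_lineable sc M C A \<longleftrightarrow> inf_ga_dense_lineable sc M C A" by (rule P3)
  qed
qed


end
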